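(* Let $T$ be a complete first-order theory in a countable language with an uncountable atomic model. Suppose $\delta(x)$ is a complete formula in one variable that is not pseudo-algebraic. Then for every countable atomic model $N$ and every finite tuple $\mathbf e\subseteq N$, there are $M\preceq N$ and $c\in N\setminus M$ such that $\mathbf e\subseteq M$ and $N\models\delta(c)$.
   Context: A complete formula is one isolating a complete type over $\emptyset$ realized in an atomic model. A complete formula $\phi(x,\mathbf a)$ in one variable is pseudo-algebraic if for some/any countable atomic $M$ containing $\mathbf a$ and any atomic $N\succeq M$ with $N\neq M$, $\phi(N,\mathbf a)=\phi(M,\mathbf a)$. *)

theory Defs
  imports Main "HOL-Library.Countable_Set"
begin

text \<open>A language is given by an arity function for function symbols and one for relation
  symbols; every element of the types 'f and 'p is a symbol of the language. Equality is
  built in.\<close>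

datatype 'f trm = Var nat | Fn 'f "'f trm list"

datatype ('f, 'p) fm =
    FF
  | Eq "'f trm" "'f trm"
  | Rel 'p "'f trm list"
  | Neg "('f, 'p) fm"
  | Conj "('f, 'p) fm" "('f, 'p) fm"
  | Ex nat "('f, 'p) fm"

definition Imp :: "('f, 'p) fm \<Rightarrow> ('f, 'p) fm \<Rightarrow> ('f, 'p) fm" where
  "Imp \<phi> \<psi> = Neg (Conj \<phi> (Neg \<psi>))"

type_synonym ('f, 'p) lang = "('f \<Rightarrow> nat) \<times> ('p \<Rightarrow> nat)"

fun wf_trm :: "('f, 'p) lang \<Rightarrow> 'f trm \<Rightarrow> bool" where
  "wf_trm L (Var i) = True"
| "wf_trm L (Fn f ts) = (length ts = fst L f \<and> (\<forall>t\<in>set ts. wf_trm L t))"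

fun wf_fm :: "('f, 'p) lang \<Rightarrow> ('f, 'p) fm \<Rightarrow> bool" where
  "wf_fm L FF = True"
| "wf_fm L (Eq s t) = (wf_trm L s \<and> wf_trm L t)"
| "wf_fm L (Rel p ts) = (length ts = snd L p \<and> (\<forall>t\<in>set ts. wf_trm L t))"
| "wf_fm L (Neg \<phi>) = wf_fm L \<phi>"
| "wf_fm L (Conj \<phi> \<psi>) = (wf_fm L \<phi> \<and> wf_fm L \<psi>)"
| "wf_fm L (Ex x \<phi>) = wf_fm L \<phi>"

fun fv_trm :: "'f trm \<Rightarrow> nat set" where
  "fv_trm (Var i) = {i}"
| "fv_trm (Fn f ts) = (\<Union>t\<in>set ts. fv_trm t)"

fun fv :: "('f, 'p) fm \<Rightarrow> nat set" where
  "fv FF = {}"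
| "fv (Eq s t) = fv_trm s \<union> fv_trm t"
| "fv (Rel p ts) = (\<Union>t\<in>set ts. fv_trm t)"
| "fv (Neg \<phi>) = fv \<phi>"
| "fv (Conj \<phi> \<psi>) = fv \<phi> \<union> fv \<psi>"
| "fv (Ex x \<phi>) = fv \<phi> - {x}"

type_synonym ('f, 'p, 'a) struct = "'a set \<times> ('f \<Rightarrow> 'a list \<Rightarrow> 'a) \<times> ('p \<Rightarrow> 'a list \<Rightarrow> bool)"

definition carrier :: "('f, 'p, 'a) struct \<Rightarrow> 'a set" where
  "carrier S = fst S"

definition is_struct :: "('f, 'p) lang \<Rightarrow> ('f, 'p, 'a) struct \<Rightarrow> bool" where
  "is_struct L S \<longleftrightarrow> carrier S \<noteq> {} \<and>
     (\<forall>f xs. xs \<in> lists (carrier S) \<and> length xs = fst L f \<longrightarrow> fst (snd S) f xs \<in> carrier S)"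

fun eval :: "('f, 'p, 'a) struct \<Rightarrow> (nat \<Rightarrow> 'a) \<Rightarrow> 'f trm \<Rightarrow> 'a" where
  "eval S v (Var i) = v i"
| "eval S v (Fn f ts) = fst (snd S) f (map (eval S v) ts)"

fun sat :: "('f, 'p, 'a) struct \<Rightarrow> (nat \<Rightarrow> 'a) \<Rightarrow> ('f, 'p) fm \<Rightarrow> bool" where
  "sat S v FF = False"
| "sat S v (Eq s t) = (eval S v s = eval S v t)"
| "sat S v (Rel p ts) = snd (snd S) p (map (eval S v) ts)"
| "sat S v (Neg \<phi>) = (\<not> sat S v \<phi>)"
| "sat S v (Conj \<phi> \<psi>) = (sat S v \<phi> \<and> sat S v \<psi>)"
| "sat S v (Ex x \<phi>) = (\<exists>a\<in>carrier S. sat S (v(x := a)) \<phi>)"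

definition model_of :: "('f, 'p) lang \<Rightarrow> ('f, 'p) fm set \<Rightarrow> ('f, 'p, 'a) struct \<Rightarrow> bool" where
  "model_of L T S \<longleftrightarrow> is_struct L S \<and>
     (\<forall>\<sigma>\<in>T. \<forall>v. range v \<subseteq> carrier S \<longrightarrow> sat S v \<sigma>)"

text \<open>Since the language is countable,
  by downward Loewenheim-Skolem it suffices to test models whose carrier is a subset of nat
  (i.e. all finite and countably infinite models, up to isomorphism).\<close>
definition consequence :: "('f, 'p) lang \<Rightarrow> ('f, 'p) fm set \<Rightarrow> ('f, 'p) fm \<Rightarrow> bool" where
  "consequence L T \<phi> \<longleftrightarrow> (\<forall>S :: ('f, 'p, nat) struct. model_of L T S \<longrightarrow>
      (\<forall>v. range v \<subseteq> carrier S \<longrightarrow> sat S v \<phi>))"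

definition sentence :: "('f, 'p) lang \<Rightarrow> ('f, 'p) fm \<Rightarrow> bool" where
  "sentence L \<sigma> \<longleftrightarrow> wf_fm L \<sigma> \<and> fv \<sigma> = {}"

definition countable_lang :: "('f, 'p) lang \<Rightarrow> bool" where
  "countable_lang L \<longleftrightarrow> countable (UNIV :: 'f set) \<and> countable (UNIV :: 'p set)"

definition complete_theory :: "('f, 'p) lang \<Rightarrow> ('f, 'p) fm set \<Rightarrow> bool" where
  "complete_theory L T \<longleftrightarrow> (\<forall>\<sigma>\<in>T. sentence L \<sigma>) \<and>
     (\<exists>S :: ('f, 'p, nat) struct. model_of L T S) \<and>
     (\<forall>\<sigma>. sentence L \<sigma> \<longrightarrow> consequence L T \<sigma> \<or> consequence L T (Neg \<sigma>))"

definition complete_fm :: "('f, 'p) lang \<Rightarrow> ('f, 'p) fm set \<Rightarrow> nat \<Rightarrow> ('f, 'p) fm \<Rightarrow> bool" where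
  "complete_fm L T n \<phi> \<longleftrightarrow> wf_fm L \<phi> \<and> fv \<phi> \<subseteq> {..<n} \<and>
     \<not> consequence L T (Neg \<phi>) \<and>
     (\<forall>\<psi>. wf_fm L \<psi> \<and> fv \<psi> \<subseteq> {..<n} \<longrightarrow>
        consequence L T (Imp \<phi> \<psi>) \<or> consequence L T (Imp \<phi> (Neg \<psi>)))"

definition sat_tuple :: "('f, 'p, 'a) struct \<Rightarrow> ('f, 'p) fm \<Rightarrow> 'a list \<Rightarrow> bool" where
  "sat_tuple S \<phi> as \<longleftrightarrow> (\<forall>v. range v \<subseteq> carrier S \<and> (\<forall>i<length as. v i = as ! i) \<longrightarrow> sat S v \<phi>)"

definition atomic_model :: "('f, 'p) lang \<Rightarrow> ('f, 'p) fm set \<Rightarrow> ('f, 'p, 'a) struct \<Rightarrow> bool" where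
  "atomic_model L T S \<longleftrightarrow> model_of L T S \<and>
     (\<forall>as \<in> lists (carrier S). \<exists>\<phi>. complete_fm L T (length as) \<phi> \<and> sat_tuple S \<phi> as)"

definition elem_sub :: "('f, 'p) lang \<Rightarrow> 'a set \<Rightarrow> ('f, 'p, 'a) struct \<Rightarrow> bool" where
  "elem_sub L B N \<longleftrightarrow> B \<noteq> {} \<and> B \<subseteq> carrier N \<and>
     (\<forall>f xs. xs \<in> lists B \<and> length xs = fst L f \<longrightarrow> fst (snd N) f xs \<in> B) \<and>
     (\<forall>\<phi> v. wf_fm L \<phi> \<and> range v \<subseteq> B \<longrightarrow> (sat (B, snd N) v \<phi> \<longleftrightarrow> sat N v \<phi>))"

definition realizations :: "('f, 'p, 'a) struct \<Rightarrow> ('f, 'p) fm \<Rightarrow> 'a set" where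
  "realizations S \<delta> = {c \<in> carrier S. sat_tuple S \<delta> [c]}"

text \<open>Pseudo-algebraic (parameter-free case, "any" reading): for every countable atomic M and
  atomic N with M \<preceq> N, M \<noteq> N, \<delta>(N) = \<delta>(M). The models N range over the type 'c; the hypothesis
  "not pseudo-algebraic" in the theorem is thus an existential over all types.\<close>
definition pseudo_algebraic ::
  "('f, 'p) lang \<Rightarrow> ('f, 'p) fm set \<Rightarrow> ('f, 'p) fm \<Rightarrow> 'c itself \<Rightarrow> bool" where
  "pseudo_algebraic L T \<delta> _ \<longleftrightarrow> complete_fm L T 1 \<delta> \<and>
     (\<forall>(N :: ('f, 'p, 'c) struct) B. atomic_model L T N \<and> elem_sub L B N \<and>
        atomic_model L T (B, snd N) \<and> countable B \<and> B \<noteq> carrier N \<longrightarrow>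
        realizations N \<delta> = realizations (B, snd N) \<delta>)"

end

theory Submission
  imports Defs
begin


lemma eval_cong: "(\<forall>i\<in>fv_trm t. v i = w i) \<Longrightarrow> eval S v t = eval S w t"
proof (induction t)
  case (Var x) then show ?case by simp
next
  case (Fn f ts)
  then have "map (eval S v) ts = map (eval S w) ts" by (intro map_cong) auto
  then show ?case by (simp only: eval.simps)
qed

lemma sat_cong: "(\<forall>i\<in>fv \<phi>. v i = w i) \<Longrightarrow> sat S v \<phi> = sat S w \<phi>"
proof (induction \<phi> arbitrary: v w)
  case (Eq s t) then show ?case using eval_cong[of s v w S] eval_cong[of t v w S] by simp
next
  case (Rel p ts)
  have "map (eval S v) ts = map (eval S w) ts"
  proof (intro map_cong refl)
    fix x assume "x \<in> set ts"
    then show "eval S v x = eval S w x" using Rel by (intro eval_cong) auto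
  qed
  then show ?case by (simp only: sat.simps)
next
  case (Conj \<phi>1 \<phi>2)
  have "sat S v \<phi>1 = sat S w \<phi>1" using Conj.prems by (intro Conj.IH(1)) auto
  moreover have "sat S v \<phi>2 = sat S w \<phi>2" using Conj.prems by (intro Conj.IH(2)) auto
  ultimately show ?case by simp
next
  case (Ex x \<phi>)
  have "\<And>a. sat S (v(x:=a)) \<phi> = sat S (w(x:=a)) \<phi>" using Ex by (intro Ex.IH) auto
  then show ?case by simp
qed auto

instance trm :: (countable) countable by countable_datatype
instance fm :: (countable, countable) countable by countable_datatype

lemma countable_fm:
  assumes "countable (UNIV :: 'f set)" "countable (UNIV :: 'p set)"
  shows "countable (UNIV :: ('f,'p) fm set)"
proof -
  have "inj (map_fm (to_nat_on (UNIV::'f set)) (to_nat_on (UNIV::'p set)))"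
    using assms by (intro fm.inj_map) auto
  then show ?thesis by (rule countable_image_inj_on[OF countableI_type])
qed

lemma carrier_pair[simp]: "carrier (B, X) = B" by (simp add: carrier_def)

definition iso :: "('f,'p) lang \<Rightarrow> ('a \<Rightarrow> 'b) \<Rightarrow> ('f,'p,'a) struct \<Rightarrow> ('f,'p,'b) struct \<Rightarrow> bool" where
  "iso L h A B \<longleftrightarrow> bij_betw h (carrier A) (carrier B) \<and>
    (\<forall>f xs. xs \<in> lists (carrier A) \<and> length xs = fst L f \<longrightarrow> h (fst (snd A) f xs) = fst (snd B) f (map h xs)) \<and>
    (\<forall>p xs. xs \<in> lists (carrier A) \<and> length xs = snd L p \<longrightarrow> snd (snd B) p (map h xs) = snd (snd A) p xs)"

lemma iso_fn: "iso L h A B \<Longrightarrow> xs \<in> lists (carrier A) \<Longrightarrow> length xs = fst L f \<Longrightarrow>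
  fst (snd B) f (map h xs) = h (fst (snd A) f xs)"
  unfolding iso_def by metis

lemma iso_rel: "iso L h A B \<Longrightarrow> xs \<in> lists (carrier A) \<Longrightarrow> length xs = snd L p \<Longrightarrow>
  snd (snd B) p (map h xs) = snd (snd A) p xs"
  unfolding iso_def by metis

lemma eval_carrier:
  assumes "is_struct L A" "range v \<subseteq> carrier A" "wf_trm L t"
  shows "eval A v t \<in> carrier A"
  using assms(3)
proof (induction t)
  case (Var x) then show ?case using assms(2) by auto
next
  case (Fn f ts)
  then have "map (eval A v) ts \<in> lists (carrier A)" "length (map (eval A v) ts) = fst L f" by auto
  then show ?case using assms(1) unfolding is_struct_def by simp
qed

lemma eval_iso:
  assumes "iso L h A B" "is_struct L A" "range v \<subseteq> carrier A" "wf_trm L t"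
  shows "eval B (h \<circ> v) t = h (eval A v t)"
  using assms(4)
proof (induction t)
  case (Var x) then show ?case by simp
next
  case (Fn f ts)
  have m: "map (eval B (h \<circ> v)) ts = map h (map (eval A v) ts)"
    unfolding map_map by (rule map_cong[OF refl]) (use Fn in \<open>auto simp: comp_def\<close>)
  have "map (eval A v) ts \<in> lists (carrier A)" "length (map (eval A v) ts) = fst L f"
    using Fn eval_carrier[OF assms(2,3)] by auto
  then have "fst (snd B) f (map h (map (eval A v) ts)) = h (fst (snd A) f (map (eval A v) ts))"
    by (rule iso_fn[OF assms(1)])
  then show ?case by (simp only: eval.simps m)
qed

lemma sat_iso:
  assumes "iso L h A B" "is_struct L A" "range v \<subseteq> carrier A" "wf_fm L \<phi>"
  shows "sat B (h \<circ> v) \<phi> = sat A v \<phi>"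
  using assms(3,4)
proof (induction \<phi> arbitrary: v)
  case (Eq s t)
  have "inj_on h (carrier A)" using assms(1) unfolding iso_def bij_betw_def by blast
  moreover have "eval B (h \<circ> v) s = h (eval A v s)" "eval B (h \<circ> v) t = h (eval A v t)"
    using Eq eval_iso[OF assms(1,2)] by auto
  moreover have "eval A v s \<in> carrier A" "eval A v t \<in> carrier A"
    using Eq eval_carrier[OF assms(2)] by auto
  ultimately show ?case by (simp only: sat.simps inj_on_eq_iff)
next
  case (Rel p ts)
  have m: "map (eval B (h \<circ> v)) ts = map h (map (eval A v) ts)"
    unfolding map_map by (rule map_cong[OF refl]) (use Rel eval_iso[OF assms(1,2)] in auto)
  have "map (eval A v) ts \<in> lists (carrier A)" "length (map (eval A v) ts) = snd L p"
    using Rel eval_carrier[OF assms(2)] by auto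
  then have "snd (snd B) p (map h (map (eval A v) ts)) = snd (snd A) p (map (eval A v) ts)"
    by (rule iso_rel[OF assms(1)])
  then show ?case by (simp only: sat.simps m)
next
  case (Ex x \<phi>)
  have hb: "h ` carrier A = carrier B" using assms(1) unfolding iso_def bij_betw_def by blast
  have "(\<exists>b\<in>carrier B. sat B ((h \<circ> v)(x := b)) \<phi>) = (\<exists>a\<in>carrier A. sat B ((h \<circ> v)(x := h a)) \<phi>)"
    using hb by (metis (no_types, lifting) image_iff)
  also have "\<dots> = (\<exists>a\<in>carrier A. sat B (h \<circ> (v(x := a))) \<phi>)"
    by (simp add: fun_upd_comp)
  also have "\<dots> = (\<exists>a\<in>carrier A. sat A (v(x := a)) \<phi>)"
    using Ex by (intro bex_cong refl Ex.IH) auto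
  finally show ?case by (simp only: sat.simps)
qed auto

definition asg :: "'a list \<Rightarrow> 'a \<Rightarrow> nat \<Rightarrow> 'a" where
  "asg xs d i = (if i < length xs then xs ! i else d)"

lemma asg_range: "set xs \<subseteq> C \<Longrightarrow> d \<in> C \<Longrightarrow> range (asg xs d) \<subseteq> C"
  unfolding asg_def by auto

lemma asg_nth: "i < length xs \<Longrightarrow> asg xs d i = xs ! i"
  unfolding asg_def by auto

lemma sat_tuple_iff:
  assumes "fv \<psi> \<subseteq> {..<length as}" "range v \<subseteq> carrier A" "\<forall>i<length as. v i = as ! i"
  shows "sat_tuple A \<psi> as \<longleftrightarrow> sat A v \<psi>"
proof
  assume "sat_tuple A \<psi> as" then show "sat A v \<psi>" using assms unfolding sat_tuple_def by blast
next
  assume s: "sat A v \<psi>"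
  show "sat_tuple A \<psi> as" unfolding sat_tuple_def
  proof (intro allI impI)
    fix w assume w: "range w \<subseteq> carrier A \<and> (\<forall>i<length as. w i = as ! i)"
    have "sat A w \<psi> = sat A v \<psi>" using w assms by (intro sat_cong) auto
    then show "sat A w \<psi>" using s by simp
  qed
qed

lemma sat_tuple_asg:
  assumes "fv \<psi> \<subseteq> {..<length as}" "set as \<subseteq> carrier A" "d \<in> carrier A"
  shows "sat_tuple A \<psi> as \<longleftrightarrow> sat A (asg as d) \<psi>"
  using assms by (intro sat_tuple_iff) (auto simp: asg_range asg_nth)

lemma sat_tuple_neg:
  assumes "carrier A \<noteq> {}" "set as \<subseteq> carrier A" "sat_tuple A (Neg \<psi>) as"
  shows "\<not> sat_tuple A \<psi> as"
proof -
  obtain d where d: "d \<in> carrier A" using assms by auto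
  have r: "range (asg as d) \<subseteq> carrier A \<and> (\<forall>i<length as. asg as d i = as ! i)"
    using asg_range[OF assms(2) d] by (auto simp: asg_nth)
  then have "\<not> sat A (asg as d) \<psi>" using assms(3) unfolding sat_tuple_def by fastforce
  then show ?thesis using r unfolding sat_tuple_def by blast
qed

lemma finite_fv_trm: "finite (fv_trm t)"
  by (induction t) auto

lemma finite_fv: "finite (fv \<phi>)"
  by (induction \<phi>) (auto simp: finite_fv_trm)

lemma eval_same: "fst (snd S) = fst (snd S') \<Longrightarrow> eval S v t = eval S' v t"
proof (induction t)
  case (Fn f ts)
  then have "map (eval S v) ts = map (eval S' v) ts" by (intro map_cong) auto
  then show ?case using Fn.prems by (simp only: eval.simps)
qed simp

lemma sat_TV:
  assumes "B \<subseteq> carrier N"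
    and TV: "\<And>\<phi> x v. range v \<subseteq> B \<Longrightarrow> \<exists>a\<in>carrier N. sat N (v(x:=a)) \<phi> \<Longrightarrow> \<exists>a\<in>B. sat N (v(x:=a)) \<phi>"
    and "range v \<subseteq> B"
  shows "sat (B, snd N) v \<phi> = sat N v \<phi>"
  using assms(3)
proof (induction \<phi> arbitrary: v)
  case (Eq s t) then show ?case using eval_same[of "(B, snd N)" N] by simp
next
  case (Rel p ts)
  have "eval (B, snd N) v = eval N v" using eval_same[of "(B, snd N)" N] by auto
  then show ?case by simp
next
  case (Ex x \<phi>)
  have "(\<exists>a\<in>B. sat (B, snd N) (v(x:=a)) \<phi>) = (\<exists>a\<in>B. sat N (v(x:=a)) \<phi>)"
    using Ex by (intro bex_cong refl Ex.IH) auto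
  also have "\<dots> = (\<exists>a\<in>carrier N. sat N (v(x:=a)) \<phi>)"
    using TV[OF Ex.prems] assms(1) by blast
  finally show ?case by simp
qed auto

lemma lists_chain:
  assumes "\<And>k. S k \<subseteq> S (Suc k)" "xs \<in> lists (\<Union>k. S k)"
  shows "\<exists>k. xs \<in> lists (S k)"
  using assms(2)
proof (induction xs)
  case Nil then show ?case by auto
next
  case (Cons x xs)
  then obtain k1 k2 where "x \<in> S k1" "xs \<in> lists (S k2)" by auto
  moreover have "S k1 \<subseteq> S (max k1 k2)" "S k2 \<subseteq> S (max k1 k2)"
    by (rule lift_Suc_mono_le[of S, OF assms(1)], simp)+
  ultimately have "x # xs \<in> lists (S (max k1 k2))" using lists_mono by auto
  then show ?case by blast
qed

lemma LS:
  assumes cl: "countable_lang L" and st: "is_struct L N" and cX: "countable X" and XN: "X \<subseteq> carrier N"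
  shows "\<exists>B. countable B \<and> X \<subseteq> B \<and> elem_sub L B N"
proof -
  obtain d where d: "d \<in> carrier N" using st unfolding is_struct_def by auto
  define F where "F = fst (snd N)"
  define wit where "wit \<phi> x ys = (SOME a. a \<in> carrier N \<and> sat N ((asg ys d)(x:=a)) \<phi>)" for \<phi> x ys
  define stp where "stp Y = Y \<union> (\<lambda>(f,xs). F f xs) ` {(f,xs). xs \<in> lists Y \<and> length xs = fst L f}
     \<union> (\<lambda>(\<phi>,x,ys). wit \<phi> x ys) ` {(\<phi>,x,ys). ys \<in> lists Y \<and> (\<exists>a\<in>carrier N. sat N ((asg ys d)(x:=a)) \<phi>)}" for Y
  define S where "S k = (stp ^^ k) (insert d X)" for k
  define B where "B = (\<Union>k. S k)"
  have Ssuc: "S (Suc k) = stp (S k)" for k by (simp add: S_def)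
  have S0: "S 0 = insert d X" by (simp add: S_def)
  have mono: "S k \<subseteq> S (Suc k)" for k unfolding Ssuc stp_def by blast
  have witN: "wit \<phi> x ys \<in> carrier N \<and> sat N ((asg ys d)(x:=wit \<phi> x ys)) \<phi>"
    if "\<exists>a\<in>carrier N. sat N ((asg ys d)(x:=a)) \<phi>" for \<phi> x ys
  proof -
    have "\<exists>a. a \<in> carrier N \<and> sat N ((asg ys d)(x:=a)) \<phi>" using that by blast
    from someI_ex[OF this] show ?thesis unfolding wit_def .
  qed
  have SN: "S k \<subseteq> carrier N" for k
  proof (induction k)
    case 0 then show ?case using d XN by (simp add: S_def)
  next
    case (Suc k)
    have "F f xs \<in> carrier N" if "xs \<in> lists (S k)" "length xs = fst L f" for f xs
      using that Suc st unfolding is_struct_def F_def by blast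
    moreover have W: "wit \<phi> x ys \<in> carrier N" if "\<exists>a\<in>carrier N. sat N ((asg ys d)(x:=a)) \<phi>" for \<phi> x ys
      using witN[OF that] by blast
    ultimately show ?case using Suc unfolding Ssuc stp_def by (auto intro!: W)
  qed
  have cfm: "countable (UNIV :: ('a,'b) fm set)" using cl countable_fm unfolding countable_lang_def by blast
  have cS: "countable (S k)" for k
  proof (induction k)
    case 0 then show ?case using cX by (simp add: S_def)
  next
    case (Suc k)
    have "countable {(f,xs). xs \<in> lists (S k) \<and> length xs = fst L f}"
      by (rule countable_subset[of _ "UNIV \<times> lists (S k)"]) (use Suc cl in \<open>auto simp: countable_lang_def\<close>)
    moreover have "countable {(\<phi>,x,ys). ys \<in> lists (S k) \<and> (\<exists>a\<in>carrier N. sat N ((asg ys d)(x:=a)) \<phi>)}"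
      by (rule countable_subset[of _ "UNIV \<times> UNIV \<times> lists (S k)"]) (use Suc cfm in auto)
    ultimately show ?case unfolding Ssuc stp_def using Suc by auto
  qed
  have BN: "B \<subseteq> carrier N" using SN unfolding B_def by auto
  have TV: "\<exists>a\<in>B. sat N (v(x:=a)) \<phi>"
    if v: "range v \<subseteq> B" and ex: "\<exists>a\<in>carrier N. sat N (v(x:=a)) \<phi>" for \<phi> x v
  proof -
    obtain m where m: "fv \<phi> \<subseteq> {..<m}"
      using finite_fv[of \<phi>] by (meson finite_nat_iff_bounded subset_eq lessThan_iff)
    define ys where "ys = map v [0..<m]"
    have ag: "sat N ((asg ys d)(x:=a)) \<phi> = sat N (v(x:=a)) \<phi>" for a
      using m by (intro sat_cong) (auto simp: ys_def asg_def)
    have "ys \<in> lists B" using v unfolding ys_def by (auto simp: image_subset_iff)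
    then obtain k where k: "ys \<in> lists (S k)" using lists_chain[of S ys, OF mono] unfolding B_def by blast
    have ex2: "\<exists>a\<in>carrier N. sat N ((asg ys d)(x:=a)) \<phi>" using ex ag by simp
    have "wit \<phi> x ys \<in> (\<lambda>(\<phi>,x,ys). wit \<phi> x ys) ` {(\<phi>,x,ys). ys \<in> lists (S k) \<and> (\<exists>a\<in>carrier N. sat N ((asg ys d)(x:=a)) \<phi>)}"
      by (rule image_eqI[where x="(\<phi>,x,ys)"]) (use ex2 k in auto)
    then have "wit \<phi> x ys \<in> S (Suc k)" unfolding Ssuc stp_def by blast
    then have "wit \<phi> x ys \<in> B" unfolding B_def by blast
    then show ?thesis using witN[OF ex2] ag by blast
  qed
  have "elem_sub L B N" unfolding elem_sub_def
  proof (intro conjI allI impI)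
    show "B \<noteq> {}" using S0 unfolding B_def by blast
    show "B \<subseteq> carrier N" by (rule BN)
    fix f xs assume a: "xs \<in> lists B \<and> length xs = fst L f"
    then obtain k where k: "xs \<in> lists (S k)" using lists_chain[of S xs, OF mono] unfolding B_def by blast
    have "F f xs \<in> (\<lambda>(f,xs). F f xs) ` {(f,xs). xs \<in> lists (S k) \<and> length xs = fst L f}"
      by (rule image_eqI[where x="(f,xs)"]) (use a k in auto)
    then have "F f xs \<in> S (Suc k)" unfolding Ssuc stp_def by blast
    then show "fst (snd N) f xs \<in> B" unfolding B_def F_def by blast
  next
    fix \<phi> :: "('a,'b) fm" and v :: "nat \<Rightarrow> 'c" assume "wf_fm L \<phi> \<and> range v \<subseteq> B"
    then show "sat (B, snd N) v \<phi> = sat N v \<phi>" using sat_TV[OF BN TV] by blast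
  qed
  moreover have "countable B" using cS unfolding B_def by auto
  moreover have "X \<subseteq> B" using S0 unfolding B_def by blast
  ultimately show ?thesis by blast
qed




lemma elem_sub_sat: "elem_sub L B N \<Longrightarrow> wf_fm L \<phi> \<Longrightarrow> range v \<subseteq> B \<Longrightarrow> sat (B, snd N) v \<phi> = sat N v \<phi>"
  unfolding elem_sub_def by blast

lemma elem_sub_sub: "elem_sub L B N \<Longrightarrow> B \<subseteq> carrier N"
  unfolding elem_sub_def by blast

lemma elem_sub_ne: "elem_sub L B N \<Longrightarrow> B \<noteq> {}"
  unfolding elem_sub_def by blast

lemma elem_sub_fn: "elem_sub L B N \<Longrightarrow> xs \<in> lists B \<Longrightarrow> length xs = fst L f \<Longrightarrow> fst (snd N) f xs \<in> B"
  unfolding elem_sub_def by blast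

lemma model_sat: "model_of L T S \<Longrightarrow> \<sigma> \<in> T \<Longrightarrow> range v \<subseteq> carrier S \<Longrightarrow> sat S v \<sigma>"
  unfolding model_of_def by blast

lemma model_struct: "model_of L T S \<Longrightarrow> is_struct L S"
  unfolding model_of_def by blast

lemma elem_sub_struct: "elem_sub L B N \<Longrightarrow> is_struct L (B, snd N)"
  unfolding is_struct_def using elem_sub_ne[of L B N] elem_sub_fn[of L B N] by simp

lemma elem_sub_model:
  assumes "elem_sub L B N" "model_of L T N" "\<forall>\<sigma>\<in>T. wf_fm L \<sigma>"
  shows "model_of L T (B, snd N)"
  unfolding model_of_def
proof (intro conjI ballI allI impI)
  show "is_struct L (B, snd N)" using elem_sub_struct[OF assms(1)] .
  fix \<sigma> and v :: "nat \<Rightarrow> 'c" assume s: "\<sigma> \<in> T" and r: "range v \<subseteq> carrier (B, snd N)"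
  have r2: "range v \<subseteq> carrier N" using r elem_sub_sub[OF assms(1)] by auto
  have "sat N v \<sigma>" using assms(2) s r2 unfolding model_of_def by blast
  moreover have "wf_fm L \<sigma>" using assms(3) s by blast
  ultimately show "sat (B, snd N) v \<sigma>" using elem_sub_sat[OF assms(1)] r by simp
qed

lemma transfer:
  assumes cl: "countable_lang L" and Twf: "\<forall>\<sigma>\<in>T. wf_fm L \<sigma>" and mS: "model_of L T S"
    and cons: "consequence L T \<chi>" and wf: "wf_fm L \<chi>" and v: "range v \<subseteq> carrier S"
  shows "sat S v \<chi>"
proof -
  have stS: "is_struct L S" using model_struct[OF mS] .
  have c1: "countable (v ` fv \<chi>)" by (rule countable_finite[OF finite_imageI[OF finite_fv]])
  have c2: "v ` fv \<chi> \<subseteq> carrier S" using v by blast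
  obtain B where cB: "countable B" and XB: "v ` fv \<chi> \<subseteq> B" and eB: "elem_sub L B S"
    using LS[OF cl stS c1 c2] by blast
  obtain b0 where b0: "b0 \<in> B" using elem_sub_ne[OF eB] by auto
  define v' where "v' i = (if i \<in> fv \<chi> then v i else b0)" for i
  have v'B: "range v' \<subseteq> B" using XB b0 unfolding v'_def by auto
  define h where "h = to_nat_on B"
  define g where "g = inv_into B h"
  have injh: "inj_on h B" unfolding h_def using cB by auto
  have gh: "g (h x) = x" if "x \<in> B" for x unfolding g_def using injh that by (simp add: inv_into_f_f)
  have hg: "h (g y) = y" if "y \<in> h ` B" for y unfolding g_def using that by (simp add: f_inv_into_f)
  have gB: "g y \<in> B" if "y \<in> h ` B" for y unfolding g_def using that by (simp add: inv_into_into)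
  define S' :: "('a, 'b, nat) struct" where
    "S' = (h ` B, \<lambda>f xs. h (fst (snd S) f (map g xs)), \<lambda>p xs. snd (snd S) p (map g xs))"
  have mapgh: "map g (map h xs) = xs" if "xs \<in> lists B" for xs
    using that gh by (induction xs) auto
  have iso: "iso L h (B, snd S) S'"
    unfolding iso_def
  proof (intro conjI allI impI)
    show "bij_betw h (carrier (B, snd S)) (carrier S')" using injh unfolding S'_def bij_betw_def by simp
  next
    fix f xs assume "xs \<in> lists (carrier (B, snd S)) \<and> length xs = fst L f"
    then show "h (fst (snd (B, snd S)) f xs) = fst (snd S') f (map h xs)" unfolding S'_def using mapgh by simp
  next
    fix p xs assume "xs \<in> lists (carrier (B, snd S)) \<and> length xs = snd L p"
    then show "snd (snd S') p (map h xs) = snd (snd (B, snd S)) p xs" unfolding S'_def using mapgh by simp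
  qed
  have stB: "is_struct L (B, snd S)" using elem_sub_struct[OF eB] .
  have stS': "is_struct L S'" unfolding is_struct_def
  proof (intro conjI allI impI)
    show "carrier S' \<noteq> {}" using b0 unfolding S'_def by auto
    fix f xs assume a: "xs \<in> lists (carrier S') \<and> length xs = fst L f"
    then have "map g xs \<in> lists B" using gB unfolding S'_def by auto
    then have "fst (snd S) f (map g xs) \<in> B" using a elem_sub_fn[OF eB] by simp
    then show "fst (snd S') f xs \<in> carrier S'" unfolding S'_def by simp
  qed
  have mS': "model_of L T S'" unfolding model_of_def
  proof (intro conjI ballI allI impI)
    show "is_struct L S'" by (rule stS')
    fix \<sigma> and w :: "nat \<Rightarrow> nat" assume \<sigma>: "\<sigma> \<in> T" and w: "range w \<subseteq> carrier S'"
    then have w': "range (g \<circ> w) \<subseteq> B" using gB unfolding S'_def by auto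
    have "h (g (w i)) = w i" for i using w hg unfolding S'_def by auto
    then have ww: "h \<circ> (g \<circ> w) = w" by (simp add: fun_eq_iff)
    have "sat S' (h \<circ> (g \<circ> w)) \<sigma> = sat (B, snd S) (g \<circ> w) \<sigma>"
      by (rule sat_iso[OF iso stB]) (use w' Twf \<sigma> in auto)
    then have "sat S' w \<sigma> = sat (B, snd S) (g \<circ> w) \<sigma>" unfolding ww .
    also have "\<dots> = sat S (g \<circ> w) \<sigma>" using elem_sub_sat[OF eB _ w'] Twf \<sigma> by blast
    also have "\<dots>" using model_sat[OF mS \<sigma>] w' elem_sub_sub[OF eB] by blast
    finally show "sat S' w \<sigma>" .
  qed
  have "range (h \<circ> v') \<subseteq> carrier S'" using v'B unfolding S'_def by auto
  then have "sat S' (h \<circ> v') \<chi>" using cons mS' unfolding consequence_def by blast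
  then have "sat (B, snd S) v' \<chi>" using sat_iso[OF iso stB _ wf] v'B by simp
  then have "sat S v' \<chi>" using elem_sub_sat[OF eB wf v'B] by simp
  moreover have "sat S v' \<chi> = sat S v \<chi>" by (intro sat_cong) (simp add: v'_def)
  ultimately show ?thesis by simp
qed




definition tp_eq :: "('f,'p) lang \<Rightarrow> ('f,'p,'a) struct \<Rightarrow> 'a list \<Rightarrow> ('f,'p,'b) struct \<Rightarrow> 'b list \<Rightarrow> bool" where
  "tp_eq L A as B bs \<longleftrightarrow> length as = length bs \<and> set as \<subseteq> carrier A \<and> set bs \<subseteq> carrier B \<and>
     (\<forall>\<psi>. wf_fm L \<psi> \<and> fv \<psi> \<subseteq> {..<length as} \<longrightarrow> (sat_tuple A \<psi> as \<longleftrightarrow> sat_tuple B \<psi> bs))"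

lemma tp_eq_sym: "tp_eq L A as B bs \<Longrightarrow> tp_eq L B bs A as"
  unfolding tp_eq_def by metis

lemma tp_eqD: "tp_eq L A as B bs \<Longrightarrow> wf_fm L \<psi> \<Longrightarrow> fv \<psi> \<subseteq> {..<length as} \<Longrightarrow> sat_tuple A \<psi> as \<longleftrightarrow> sat_tuple B \<psi> bs"
  unfolding tp_eq_def by blast

lemma cons_tuple:
  assumes "countable_lang L" "\<forall>\<sigma>\<in>T. wf_fm L \<sigma>" "model_of L T A" "consequence L T \<chi>" "wf_fm L \<chi>"
  shows "sat_tuple A \<chi> as"
  unfolding sat_tuple_def using transfer[OF assms] by blast

lemma imp_tuple:
  assumes "countable_lang L" "\<forall>\<sigma>\<in>T. wf_fm L \<sigma>" "model_of L T A" "consequence L T (Imp \<phi> \<psi>)"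
    "wf_fm L \<phi>" "wf_fm L \<psi>" "sat_tuple A \<phi> as"
  shows "sat_tuple A \<psi> as"
proof -
  have "wf_fm L (Imp \<phi> \<psi>)" using assms by (simp add: Imp_def)
  then have "sat_tuple A (Imp \<phi> \<psi>) as" using cons_tuple[OF assms(1-4)] by blast
  then show ?thesis using assms(7) unfolding sat_tuple_def Imp_def by auto
qed

lemma struct_ne: "model_of L T A \<Longrightarrow> carrier A \<noteq> {}"
  using model_struct unfolding is_struct_def by blast

lemma tp_eq_complete:
  assumes cl: "countable_lang L" and Twf: "\<forall>\<sigma>\<in>T. wf_fm L \<sigma>" and mA: "model_of L T A" and mB: "model_of L T B"
    and c: "complete_fm L T n \<phi>" and sa: "set as \<subseteq> carrier A" and sb: "set bs \<subseteq> carrier B"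
    and la: "length as = n" and lb: "length bs = n"
    and ta: "sat_tuple A \<phi> as" and tb: "sat_tuple B \<phi> bs"
  shows "tp_eq L A as B bs"
  unfolding tp_eq_def
proof (intro conjI allI impI)
  fix \<psi> assume \<psi>: "wf_fm L \<psi> \<and> fv \<psi> \<subseteq> {..<length as}"
  have wf\<phi>: "wf_fm L \<phi>" using c unfolding complete_fm_def by blast
  have "consequence L T (Imp \<phi> \<psi>) \<or> consequence L T (Imp \<phi> (Neg \<psi>))"
    using c \<psi> la unfolding complete_fm_def by blast
  then show "sat_tuple A \<psi> as = sat_tuple B \<psi> bs"
  proof
    assume "consequence L T (Imp \<phi> \<psi>)"
    then show ?thesis using imp_tuple[OF cl Twf mA _ wf\<phi> _ ta] imp_tuple[OF cl Twf mB _ wf\<phi> _ tb] \<psi> by blast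
  next
    assume "consequence L T (Imp \<phi> (Neg \<psi>))"
    then have "sat_tuple A (Neg \<psi>) as" "sat_tuple B (Neg \<psi>) bs"
      using imp_tuple[OF cl Twf mA _ wf\<phi> _ ta] imp_tuple[OF cl Twf mB _ wf\<phi> _ tb] \<psi> by auto
    then show ?thesis using sat_tuple_neg[OF struct_ne[OF mA] sa] sat_tuple_neg[OF struct_ne[OF mB] sb] by blast
  qed
qed (use assms in auto)

lemma forth_step:
  assumes cl: "countable_lang L" and Twf: "\<forall>\<sigma>\<in>T. wf_fm L \<sigma>" and aA: "atomic_model L T A" and mB: "model_of L T B"
    and te: "tp_eq L A as B bs" and a: "a \<in> carrier A"
  shows "\<exists>b\<in>carrier B. tp_eq L A (as @ [a]) B (bs @ [b])"
proof -
  have mA: "model_of L T A" using aA unfolding atomic_model_def by blast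
  define n where "n = length as"
  have ln: "length bs = n" using te unfolding tp_eq_def n_def by simp
  have sa: "set as \<subseteq> carrier A" and sb: "set bs \<subseteq> carrier B" using te unfolding tp_eq_def by auto
  have "as @ [a] \<in> lists (carrier A)" using sa a by auto
  then have "\<exists>\<phi>. complete_fm L T (length (as @ [a])) \<phi> \<and> sat_tuple A \<phi> (as @ [a])"
    using aA unfolding atomic_model_def by blast
  then obtain \<phi> where c: "complete_fm L T (Suc n) \<phi>" and t\<phi>: "sat_tuple A \<phi> (as @ [a])"
    unfolding n_def by auto
  have wf\<phi>: "wf_fm L \<phi>" and fv\<phi>: "fv \<phi> \<subseteq> {..<Suc n}" using c unfolding complete_fm_def by auto
  have fvE: "fv (Ex n \<phi>) \<subseteq> {..<n}" using fv\<phi> by auto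
  obtain dA where dA: "dA \<in> carrier A" using struct_ne[OF mA] by blast
  obtain dB where dB: "dB \<in> carrier B" using struct_ne[OF mB] by blast
  have "range ((asg as dA)(n := a)) \<subseteq> carrier A" using asg_range[OF sa dA] a by auto
  moreover have "\<forall>i<length (as @ [a]). ((asg as dA)(n := a)) i = (as @ [a]) ! i"
    by (auto simp: asg_def n_def nth_append)
  ultimately have "sat A ((asg as dA)(n := a)) \<phi>" using t\<phi> unfolding sat_tuple_def by blast
  then have "sat A (asg as dA) (Ex n \<phi>)" using a by auto
  then have "sat_tuple A (Ex n \<phi>) as" using sat_tuple_asg[OF _ sa dA] fvE n_def by blast
  then have "sat_tuple B (Ex n \<phi>) bs" using tp_eqD[OF te] wf\<phi> fvE n_def by simp
  then have "sat B (asg bs dB) (Ex n \<phi>)" using sat_tuple_asg[OF _ sb dB] fvE ln by blast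
  then obtain b where b: "b \<in> carrier B" and sb2: "sat B ((asg bs dB)(n := b)) \<phi>" by auto
  have r: "range ((asg bs dB)(n := b)) \<subseteq> carrier B" using asg_range[OF sb dB] b by auto
  have ag: "\<forall>i<length (bs @ [b]). ((asg bs dB)(n := b)) i = (bs @ [b]) ! i"
    using ln by (auto simp: asg_def nth_append)
  have fvb: "fv \<phi> \<subseteq> {..<length (bs @ [b])}" using fv\<phi> ln by simp
  have tb: "sat_tuple B \<phi> (bs @ [b])" using sat_tuple_iff[OF fvb r ag] sb2 by blast
  have "tp_eq L A (as @ [a]) B (bs @ [b])"
    by (rule tp_eq_complete[OF cl Twf mA mB c _ _ _ _ t\<phi> tb]) (use sa sb a b ln n_def in auto)
  then show ?thesis using b by blast
qed

lemma back_step: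
  assumes cl: "countable_lang L" and Twf: "\<forall>\<sigma>\<in>T. wf_fm L \<sigma>" and mA: "model_of L T A" and aB: "atomic_model L T B"
    and te: "tp_eq L A as B bs" and b: "b \<in> carrier B"
  shows "\<exists>a\<in>carrier A. tp_eq L A (as @ [a]) B (bs @ [b])"
  using forth_step[OF cl Twf aB mA tp_eq_sym[OF te] b] tp_eq_sym by blast

lemma tp_eq_nil:
  assumes cl: "countable_lang L" and ct: "complete_theory L T" and mA: "model_of L T A" and mB: "model_of L T B"
  shows "tp_eq L A [] B []"
  unfolding tp_eq_def
proof (intro conjI allI impI)
  have Twf: "\<forall>\<sigma>\<in>T. wf_fm L \<sigma>" using ct unfolding complete_theory_def sentence_def by blast
  fix \<psi> assume \<psi>: "wf_fm L \<psi> \<and> fv \<psi> \<subseteq> {..<length ([] :: 'c list)}"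
  then have "sentence L \<psi>" unfolding sentence_def by auto
  then have "consequence L T \<psi> \<or> consequence L T (Neg \<psi>)" using ct unfolding complete_theory_def by blast
  then show "sat_tuple A \<psi> [] = sat_tuple B \<psi> []"
  proof
    assume "consequence L T \<psi>"
    then show ?thesis using cons_tuple[OF cl Twf mA] cons_tuple[OF cl Twf mB] \<psi> by blast
  next
    assume "consequence L T (Neg \<psi>)"
    then have "sat_tuple A (Neg \<psi>) []" "sat_tuple B (Neg \<psi>) []"
      using cons_tuple[OF cl Twf mA] cons_tuple[OF cl Twf mB] \<psi> by auto
    then show ?thesis using sat_tuple_neg[OF struct_ne[OF mA]] sat_tuple_neg[OF struct_ne[OF mB]] by auto
  qed
qed auto




lemma lists_range_map: "xs \<in> lists (range f) \<Longrightarrow> \<exists>ks. xs = map f ks"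
proof (induction xs)
  case (Cons x xs)
  then obtain ks i where "xs = map f ks" "x = f i" by auto
  then show ?case by (metis list.simps(9))
qed simp

lemma back_and_forth:
  assumes cl: "countable_lang L" and Twf: "\<forall>\<sigma>\<in>T. wf_fm L \<sigma>"
    and aA: "atomic_model L T A" and aB: "atomic_model L T B"
    and cA: "countable (carrier A)" and cB: "countable (carrier B)"
    and te: "tp_eq L A as0 B bs0"
  shows "\<exists>g. iso L g A B \<and> (\<forall>i<length as0. g (as0 ! i) = bs0 ! i)"
proof -
  have mA: "model_of L T A" using aA unfolding atomic_model_def by blast
  have mB: "model_of L T B" using aB unfolding atomic_model_def by blast
  have neA: "carrier A \<noteq> {}" using struct_ne[OF mA] .
  have neB: "carrier B \<noteq> {}" using struct_ne[OF mB] .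
  define ea where "ea = from_nat_into (carrier A)"
  define eb where "eb = from_nat_into (carrier B)"
  have eaA: "ea k \<in> carrier A" for k unfolding ea_def using from_nat_into[OF neA] .
  have ebB: "eb k \<in> carrier B" for k unfolding eb_def using from_nat_into[OF neB] .
  define fb where "fb xs ys = (SOME b. b \<in> carrier B \<and> tp_eq L A xs B (ys @ [b]))" for xs ys
  define fa where "fa xs ys = (SOME a. a \<in> carrier A \<and> tp_eq L A (xs @ [a]) B ys)" for xs ys
  define ext where "ext k p = (let xs1 = fst p @ [ea k]; ys1 = snd p @ [fb xs1 (snd p)];
       ys2 = ys1 @ [eb k]; xs2 = xs1 @ [fa xs1 ys2] in (xs2, ys2))" for k p
  define P where "P = rec_nat (as0, bs0) ext"
  have P0: "P 0 = (as0, bs0)" unfolding P_def by simp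
  have PS: "P (Suc k) = ext k (P k)" for k unfolding P_def by simp
  define n0 where "n0 = length as0"
  have fstS: "\<exists>u. fst (P (Suc k)) = fst (P k) @ [ea k, u]" for k
    unfolding PS ext_def by (simp add: Let_def)
  have sndS: "\<exists>u. snd (P (Suc k)) = snd (P k) @ [u, eb k]" for k
    unfolding PS ext_def by (simp add: Let_def)
  have inv: "tp_eq L A (fst (P k)) B (snd (P k))" for k
  proof (induction k)
    case 0 then show ?case using te P0 by simp
  next
    case (Suc k)
    define xs1 where "xs1 = fst (P k) @ [ea k]"
    have "\<exists>b. b \<in> carrier B \<and> tp_eq L A xs1 B (snd (P k) @ [b])"
      using forth_step[OF cl Twf aA mB Suc eaA] unfolding xs1_def by blast
    then have t1: "tp_eq L A xs1 B (snd (P k) @ [fb xs1 (snd (P k))])"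
      unfolding fb_def by (rule someI2_ex) blast
    define ys2 where "ys2 = snd (P k) @ [fb xs1 (snd (P k))] @ [eb k]"
    have "\<exists>a. a \<in> carrier A \<and> tp_eq L A (xs1 @ [a]) B ys2"
      using back_step[OF cl Twf mA aB t1 ebB] unfolding ys2_def by auto
    then have t2: "tp_eq L A (xs1 @ [fa xs1 ys2]) B ys2"
      unfolding fa_def by (rule someI2_ex) blast
    have "P (Suc k) = (xs1 @ [fa xs1 ys2], ys2)"
      unfolding PS ext_def xs1_def ys2_def by (simp add: Let_def)
    then show ?case using t2 by simp
  qed
  have lenA: "length (fst (P k)) = n0 + 2 * k" for k
  proof (induction k)
    case 0 then show ?case using P0 n0_def by simp
  next
    case (Suc k) then show ?case using fstS[of k] by auto
  qed
  have prefA: "\<exists>zs. fst (P k') = fst (P k) @ zs" if "k \<le> k'" for k k'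
    using that
  proof (induction k' rule: dec_induct)
    case (step m) then show ?case using fstS[of m] by (metis append.assoc)
  qed simp
  have prefB: "\<exists>zs. snd (P k') = snd (P k) @ zs" if "k \<le> k'" for k k'
    using that
  proof (induction k' rule: dec_induct)
    case (step m) then show ?case using sndS[of m] by (metis append.assoc)
  qed simp
  have lenB: "length (snd (P k)) = n0 + 2 * k" for k using inv[of k] lenA[of k] unfolding tp_eq_def by simp
  define xa where "xa i = fst (P (Suc i)) ! i" for i
  define yb where "yb i = snd (P (Suc i)) ! i" for i
  have XA: "fst (P k) ! i = xa i" if "i < length (fst (P k))" for k i
  proof -
    have i2: "i < length (fst (P (Suc i)))" using lenA by simp
    obtain z1 where z1: "fst (P (max k (Suc i))) = fst (P k) @ z1" using prefA by fastforce
    obtain z2 where z2: "fst (P (max k (Suc i))) = fst (P (Suc i)) @ z2" using prefA by fastforce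
    have "fst (P (max k (Suc i))) ! i = fst (P k) ! i" using z1 that by (simp add: nth_append)
    moreover have "fst (P (max k (Suc i))) ! i = fst (P (Suc i)) ! i" using z2 i2 by (simp add: nth_append)
    ultimately show ?thesis unfolding xa_def by simp
  qed
  have YB: "snd (P k) ! i = yb i" if "i < length (snd (P k))" for k i
  proof -
    have i2: "i < length (snd (P (Suc i)))" using lenB by simp
    obtain z1 where z1: "snd (P (max k (Suc i))) = snd (P k) @ z1" using prefB by fastforce
    obtain z2 where z2: "snd (P (max k (Suc i))) = snd (P (Suc i)) @ z2" using prefB by fastforce
    have "snd (P (max k (Suc i))) ! i = snd (P k) ! i" using z1 that by (simp add: nth_append)
    moreover have "snd (P (max k (Suc i))) ! i = snd (P (Suc i)) ! i" using z2 i2 by (simp add: nth_append)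
    ultimately show ?thesis unfolding yb_def by simp
  qed
  have xaA: "xa i \<in> carrier A" for i
    using inv[of "Suc i"] lenA[of "Suc i"] unfolding xa_def tp_eq_def by auto
  have ybB: "yb i \<in> carrier B" for i
    using inv[of "Suc i"] lenB[of "Suc i"] unfolding yb_def tp_eq_def by auto
  have rxa: "range xa \<subseteq> carrier A" using xaA by auto
  have ryb: "range yb \<subseteq> carrier B" using ybB by auto
  have KEY: "sat A xa \<psi> = sat B yb \<psi>" if wf: "wf_fm L \<psi>" for \<psi>
  proof -
    obtain m where m: "fv \<psi> \<subseteq> {..<m}"
      using finite_fv[of \<psi>] by (meson finite_nat_iff_bounded subset_eq lessThan_iff)
    have fA: "fv \<psi> \<subseteq> {..<length (fst (P m))}" using m lenA by auto
    have fB: "fv \<psi> \<subseteq> {..<length (snd (P m))}" using m lenB by auto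
    have "sat A xa \<psi> = sat_tuple A \<psi> (fst (P m))"
      using sat_tuple_iff[OF fA rxa] XA by auto
    also have "\<dots> = sat_tuple B \<psi> (snd (P m))" using tp_eqD[OF inv wf fA] .
    also have "\<dots> = sat B yb \<psi>"
      using sat_tuple_iff[OF fB ryb] YB by auto
    finally show ?thesis .
  qed
  have eqiff: "xa i = xa j \<longleftrightarrow> yb i = yb j" for i j
    using KEY[of "Eq (Var i) (Var j)"] by simp
  have rA: "range xa = carrier A"
  proof
    show "carrier A \<subseteq> range xa"
    proof
      fix a assume "a \<in> carrier A"
      then obtain k where k: "ea k = a" unfolding ea_def using from_nat_into_surj[OF cA] by blast
      obtain u where u: "fst (P (Suc k)) = fst (P k) @ [ea k, u]" using fstS by blast
      have "fst (P (Suc k)) ! (n0 + 2 * k) = ea k" using u lenA[of k] by (simp add: nth_append)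
      then have "xa (n0 + 2 * k) = a" using XA[of "n0 + 2 * k" "Suc k"] lenA[of "Suc k"] k by simp
      then show "a \<in> range xa" by (metis rangeI)
    qed
  qed (rule rxa)
  have rB: "range yb = carrier B"
  proof
    show "carrier B \<subseteq> range yb"
    proof
      fix b assume "b \<in> carrier B"
      then obtain k where k: "eb k = b" unfolding eb_def using from_nat_into_surj[OF cB] by blast
      obtain u where u: "snd (P (Suc k)) = snd (P k) @ [u, eb k]" using sndS by blast
      have "snd (P (Suc k)) ! (Suc (n0 + 2 * k)) = eb k" using u lenB[of k] by (simp add: nth_append)
      then have "yb (Suc (n0 + 2 * k)) = b" using YB[of "Suc (n0 + 2 * k)" "Suc k"] lenB[of "Suc k"] k by simp
      then show "b \<in> range yb" by (metis rangeI)
    qed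
  qed (rule ryb)
  define g where "g a = yb (SOME i. xa i = a)" for a
  have gxa: "g (xa i) = yb i" for i
  proof -
    have "xa (SOME j. xa j = xa i) = xa i" by (rule someI) (rule refl)
    then show ?thesis unfolding g_def using eqiff by blast
  qed
  have gmap: "map g (map xa ks) = map yb ks" for ks using gxa by (induction ks) auto
  have iso: "iso L g A B" unfolding iso_def
  proof (intro conjI allI impI)
    show "bij_betw g (carrier A) (carrier B)" unfolding bij_betw_def
    proof
      show "inj_on g (carrier A)" unfolding rA[symmetric]
        by (rule inj_onI) (metis gxa eqiff imageE)
      have "g ` range xa = range yb" using gxa by (auto simp: image_iff)
      then show "g ` carrier A = carrier B" using rA rB by simp
    qed
  next
    fix f xs assume a: "xs \<in> lists (carrier A) \<and> length xs = fst L f"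
    then obtain ks where ks: "xs = map xa ks" using lists_range_map[of xs xa] rA by auto
    have "fst (snd A) f xs \<in> carrier A" using a model_struct[OF mA] unfolding is_struct_def by blast
    then obtain j where j: "fst (snd A) f xs = xa j" using rA by blast
    have wf: "wf_fm L (Eq (Fn f (map Var ks)) (Var j))" using a ks by simp
    have "sat A xa (Eq (Fn f (map Var ks)) (Var j))" using j ks by (simp add: comp_def)
    then have "sat B yb (Eq (Fn f (map Var ks)) (Var j))" using KEY[OF wf] by simp
    then have "fst (snd B) f (map yb ks) = yb j" by (simp add: comp_def)
    moreover have mg: "map g xs = map yb ks" unfolding ks by (rule gmap)
    ultimately show "g (fst (snd A) f xs) = fst (snd B) f (map g xs)" by (simp only: mg j gxa)
  next
    fix p xs assume a: "xs \<in> lists (carrier A) \<and> length xs = snd L p"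
    then obtain ks where ks: "xs = map xa ks" using lists_range_map[of xs xa] rA by auto
    have wf: "wf_fm L (Rel p (map Var ks))" using a ks by simp
    have "sat A xa (Rel p (map Var ks)) = sat B yb (Rel p (map Var ks))" using KEY[OF wf] .
    moreover have mg: "map g xs = map yb ks" unfolding ks by (rule gmap)
    moreover have "sat A xa (Rel p (map Var ks)) = snd (snd A) p xs" using ks by (simp add: comp_def)
    moreover have "sat B yb (Rel p (map Var ks)) = snd (snd B) p (map yb ks)" by (simp add: comp_def)
    ultimately show "snd (snd B) p (map g xs) = snd (snd A) p xs" by (simp only: mg)
  qed
  have "g (as0 ! i) = bs0 ! i" if "i < length as0" for i
  proof -
    have "as0 ! i = xa i" using XA[of i 0] P0 that by simp
    moreover have "bs0 ! i = yb i" using YB[of i 0] P0 that te unfolding tp_eq_def by simp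
    ultimately show ?thesis using gxa by simp
  qed
  then show ?thesis using iso by blast
qed




lemma iso_image: "iso L g A B \<Longrightarrow> g ` carrier A = carrier B"
  unfolding iso_def bij_betw_def by (elim conjE)

lemma iso_inj: "iso L g A B \<Longrightarrow> inj_on g (carrier A)"
  unfolding iso_def bij_betw_def by (elim conjE)

lemma struct_ne2: "is_struct L A \<Longrightarrow> carrier A \<noteq> {}"
  unfolding is_struct_def by (elim conjE)

lemma elem_sub_tuple:
  assumes eB: "elem_sub L B N" and wf: "wf_fm L \<psi>" and fv: "fv \<psi> \<subseteq> {..<length xs}" and sx: "set xs \<subseteq> B"
  shows "sat_tuple (B, snd N) \<psi> xs \<longleftrightarrow> sat_tuple N \<psi> xs"
proof -
  obtain b where b: "b \<in> B" using elem_sub_ne[OF eB] by blast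
  have BN: "B \<subseteq> carrier N" using elem_sub_sub[OF eB] .
  have r: "range (asg xs b) \<subseteq> B" using asg_range[OF sx b] .
  have "sat_tuple (B, snd N) \<psi> xs = sat (B, snd N) (asg xs b) \<psi>"
    using sat_tuple_asg[of \<psi> xs "(B, snd N)" b] fv sx b by simp
  also have "\<dots> = sat N (asg xs b) \<psi>" using elem_sub_sat[OF eB wf r] .
  also have "\<dots> = sat_tuple N \<psi> xs"
    using sat_tuple_asg[of \<psi> xs N b] fv sx b BN by auto
  finally show ?thesis .
qed

lemma elem_sub_trans:
  assumes eB: "elem_sub L B N" and eC: "elem_sub L Cs N" and BC: "B \<subseteq> Cs"
  shows "elem_sub L B (Cs, snd N)"
  unfolding elem_sub_def
proof (intro conjI allI impI)
  show "B \<noteq> {}" using elem_sub_ne[OF eB] .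
  show "B \<subseteq> carrier (Cs, snd N)" using BC by simp
  fix f xs assume "xs \<in> lists B \<and> length xs = fst L f"
  then show "fst (snd (Cs, snd N)) f xs \<in> B" using elem_sub_fn[OF eB] by simp
next
  fix \<phi> and v :: "nat \<Rightarrow> 'c" assume a: "wf_fm L \<phi> \<and> range v \<subseteq> B"
  then have "range v \<subseteq> Cs" using BC by blast
  then show "sat (B, snd (Cs, snd N)) v \<phi> = sat (Cs, snd N) v \<phi>"
    using elem_sub_sat[OF eB] elem_sub_sat[OF eC] a by simp
qed

lemma elem_sub_atomic:
  assumes aN: "atomic_model L T N" and eC: "elem_sub L Cs N" and Twf: "\<forall>\<sigma>\<in>T. wf_fm L \<sigma>"
  shows "atomic_model L T (Cs, snd N)"
  unfolding atomic_model_def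
proof (intro conjI ballI)
  have mN: "model_of L T N" using aN unfolding atomic_model_def by blast
  show "model_of L T (Cs, snd N)" using elem_sub_model[OF eC mN Twf] .
  fix as assume as: "as \<in> lists (carrier (Cs, snd N))"
  have "as \<in> lists (carrier N)" using as elem_sub_sub[OF eC] by auto
  then obtain \<phi> where c: "complete_fm L T (length as) \<phi>" and t: "sat_tuple N \<phi> as"
    using aN unfolding atomic_model_def by blast
  have "wf_fm L \<phi>" "fv \<phi> \<subseteq> {..<length as}" using c unfolding complete_fm_def by auto
  then have "sat_tuple (Cs, snd N) \<phi> as" using elem_sub_tuple[OF eC] t as by auto
  then show "\<exists>\<phi>. complete_fm L T (length as) \<phi> \<and> sat_tuple (Cs, snd N) \<phi> as" using c by blast
qed

lemma tp_eq_elem: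
  assumes eB: "elem_sub L B C" and te: "tp_eq L (B, snd C) xs N ys"
  shows "tp_eq L C xs N ys"
  unfolding tp_eq_def
proof (intro conjI allI impI)
  have sx: "set xs \<subseteq> B" using te unfolding tp_eq_def by simp
  then show "set xs \<subseteq> carrier C" using elem_sub_sub[OF eB] by blast
  show "length xs = length ys" "set ys \<subseteq> carrier N" using te unfolding tp_eq_def by auto
  fix \<psi> assume \<psi>: "wf_fm L \<psi> \<and> fv \<psi> \<subseteq> {..<length xs}"
  then show "sat_tuple C \<psi> xs = sat_tuple N \<psi> ys"
    using elem_sub_tuple[OF eB _ _ sx] tp_eqD[OF te] by blast
qed

lemma lists_image_map: "xs \<in> lists (f ` A) \<Longrightarrow> \<exists>ys\<in>lists A. xs = map f ys"
proof (induction xs)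
  case (Cons x xs)
  then obtain ys y where "ys \<in> lists A" "xs = map f ys" "y \<in> A" "x = f y" by auto
  then show ?case by (metis Cons_in_lists_iff list.simps(9))
qed simp

lemma iso_restrict:
  assumes iso: "iso L g C N" and BC: "B \<subseteq> carrier C"
  shows "iso L g (B, snd C) (g ` B, snd N)"
  unfolding iso_def
proof (intro conjI allI impI)
  have "inj_on g (carrier C)" using iso_inj[OF iso] .
  then have "inj_on g B" using BC by (rule inj_on_subset)
  then show "bij_betw g (carrier (B, snd C)) (carrier (g ` B, snd N))"
    unfolding carrier_pair bij_betw_def by (intro conjI refl)
next
  fix f xs assume "xs \<in> lists (carrier (B, snd C)) \<and> length xs = fst L f"
  then have "xs \<in> lists (carrier C)" "length xs = fst L f" using BC by auto
  then have "fst (snd N) f (map g xs) = g (fst (snd C) f xs)" by (rule iso_fn[OF iso])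
  then show "g (fst (snd (B, snd C)) f xs) = fst (snd (g ` B, snd N)) f (map g xs)"
    by (simp only: snd_conv)
next
  fix p xs assume "xs \<in> lists (carrier (B, snd C)) \<and> length xs = snd L p"
  then have "xs \<in> lists (carrier C)" "length xs = snd L p" using BC by auto
  then have "snd (snd N) p (map g xs) = snd (snd C) p xs" by (rule iso_rel[OF iso])
  then show "snd (snd (g ` B, snd N)) p (map g xs) = snd (snd (B, snd C)) p xs"
    by (simp only: snd_conv)
qed

lemma iso_elem_sub:
  assumes iso: "iso L g C N" and stC: "is_struct L C" and eB: "elem_sub L B C"
  shows "elem_sub L (g ` B) N"
  unfolding elem_sub_def
proof (intro conjI allI impI)
  have BC: "B \<subseteq> carrier C" using elem_sub_sub[OF eB] .
  have gC: "g ` carrier C = carrier N" using iso_image[OF iso] .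
  show "g ` B \<noteq> {}" using elem_sub_ne[OF eB] by blast
  show "g ` B \<subseteq> carrier N" using BC gC by blast
  fix f xs assume a: "xs \<in> lists (g ` B) \<and> length xs = fst L f"
  have "\<exists>ys\<in>lists B. xs = map g ys" using a lists_image_map[of xs g B] by blast
  then obtain ys where ys: "ys \<in> lists B" "xs = map g ys" by blast
  have yC: "ys \<in> lists (carrier C)" using lists_mono[OF BC] ys(1) by blast
  have ly: "length ys = fst L f" using a ys(2) by simp
  have "fst (snd N) f (map g ys) = g (fst (snd C) f ys)" by (rule iso_fn[OF iso yC ly])
  then have "fst (snd N) f xs = g (fst (snd C) f ys)" unfolding ys(2) .
  moreover have "fst (snd C) f ys \<in> B" by (rule elem_sub_fn[OF eB ys(1) ly])
  ultimately show "fst (snd N) f xs \<in> g ` B" by blast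
next
  fix \<phi> and v :: "nat \<Rightarrow> 'd" assume a: "wf_fm L \<phi> \<and> range v \<subseteq> g ` B"
  have BC: "B \<subseteq> carrier C" using elem_sub_sub[OF eB] .
  define u where "u = inv_into B g \<circ> v"
  have vi: "v i \<in> g ` B" for i using a by blast
  have uB: "range u \<subseteq> B" unfolding u_def using inv_into_into[OF vi] by auto
  have "g (u i) = v i" for i unfolding u_def o_apply by (rule f_inv_into_f[OF vi])
  then have vu: "g \<circ> u = v" by (simp add: fun_eq_iff)
  have wf: "wf_fm L \<phi>" using a by blast
  have uB': "range u \<subseteq> carrier (B, snd C)" using uB by simp
  have uC: "range u \<subseteq> carrier C" using uB BC by blast
  have "sat (g ` B, snd N) (g \<circ> u) \<phi> = sat (B, snd C) u \<phi>"
    by (rule sat_iso[OF iso_restrict[OF iso BC] elem_sub_struct[OF eB] uB' wf])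
  also have "\<dots> = sat C u \<phi>" by (rule elem_sub_sat[OF eB wf uB])
  also have "\<dots> = sat N (g \<circ> u) \<phi>" by (rule sat_iso[OF iso stC uC wf, symmetric])
  finally show "sat (g ` B, snd N) v \<phi> = sat N v \<phi>" unfolding vu .
qed

lemma iso_tuple:
  assumes iso: "iso L g A B" and stA: "is_struct L A" and wf: "wf_fm L \<psi>"
    and fv: "fv \<psi> \<subseteq> {..<length xs}" and sx: "set xs \<subseteq> carrier A" and t: "sat_tuple A \<psi> xs"
  shows "sat_tuple B \<psi> (map g xs)"
proof -
  obtain d where d: "d \<in> carrier A" using struct_ne2[OF stA] by blast
  have r: "range (asg xs d) \<subseteq> carrier A" using asg_range[OF sx d] .
  have "sat A (asg xs d) \<psi>" using sat_tuple_asg[OF fv sx d] t by blast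
  then have s: "sat B (g \<circ> asg xs d) \<psi>" using sat_iso[OF iso stA r wf] by simp
  have gC: "g ` carrier A = carrier B" using iso_image[OF iso] .
  have r2: "range (g \<circ> asg xs d) \<subseteq> carrier B" using r gC by auto
  have ag: "\<forall>i<length (map g xs). (g \<circ> asg xs d) i = map g xs ! i" by (simp add: asg_nth)
  have fv2: "fv \<psi> \<subseteq> {..<length (map g xs)}" using fv by simp
  show ?thesis using sat_tuple_iff[OF fv2 r2 ag] s by blast
qed

theorem lemma3p3p2:
  fixes L :: "('f, 'p) lang" and T :: "('f, 'p) fm set" and \<delta> :: "('f, 'p) fm"
    and N :: "('f, 'p, 'a) struct" and e :: "'a list"
  assumes "countable_lang L"
    and "complete_theory L T"
    and "\<exists>U :: ('f, 'p, 'b) struct. atomic_model L T U \<and> \<not> countable (carrier U)"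
    and "complete_fm L T 1 \<delta>"
    and "\<not> pseudo_algebraic L T \<delta> TYPE('c)"
    and "atomic_model L T N" and "countable (carrier N)"
    and "set e \<subseteq> carrier N"
  shows "\<exists>B. elem_sub L B N \<and> set e \<subseteq> B \<and>
           (\<exists>c \<in> carrier N - B. sat_tuple N \<delta> [c])"
proof -
  note cl = assms(1) and ct = assms(2) and c\<delta> = assms(4) and aN = assms(6) and cN = assms(7) and eN = assms(8)
  have Twf: "\<forall>\<sigma>\<in>T. wf_fm L \<sigma>" using ct unfolding complete_theory_def sentence_def by blast
  have wf\<delta>: "wf_fm L \<delta>" and fv\<delta>: "fv \<delta> \<subseteq> {..<1}" using c\<delta> unfolding complete_fm_def by auto
  have mN: "model_of L T N" using aN unfolding atomic_model_def by blast
  obtain N' :: "('f, 'p, 'c) struct" and B' where aN': "atomic_model L T N'" and eB': "elem_sub L B' N'"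
    and aB': "atomic_model L T (B', snd N')" and cB': "countable B'"
    and rd: "realizations N' \<delta> \<noteq> realizations (B', snd N') \<delta>"
    using assms(5) c\<delta> unfolding pseudo_algebraic_def by blast
  have "realizations (B', snd N') \<delta> = {c \<in> B'. sat_tuple N' \<delta> [c]}"
    unfolding realizations_def using elem_sub_tuple[OF eB' wf\<delta>] fv\<delta> by auto
  then obtain c' where c'N: "c' \<in> carrier N'" and c'B: "c' \<notin> B'" and tc': "sat_tuple N' \<delta> [c']"
    using rd elem_sub_sub[OF eB'] unfolding realizations_def by blast
  have stN': "is_struct L N'" using model_struct aN' unfolding atomic_model_def by blast
  have i1: "countable (insert c' B')" using cB' by simp
  have i2: "insert c' B' \<subseteq> carrier N'" using c'N elem_sub_sub[OF eB'] by blast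
  obtain Cs where cCs: "countable Cs" and XC: "insert c' B' \<subseteq> Cs" and eC: "elem_sub L Cs N'"
    using LS[OF cl stN' i1 i2] by blast
  define C where "C = (Cs, snd N')"
  have "B' \<subseteq> Cs" using XC by blast
  then have eBC: "elem_sub L B' C" unfolding C_def by (rule elem_sub_trans[OF eB' eC])
  have aC: "atomic_model L T C" unfolding C_def using elem_sub_atomic[OF aN' eC Twf] .
  have mC: "model_of L T C" using aC unfolding atomic_model_def by blast
  have mB': "model_of L T (B', snd N')" using aB' unfolding atomic_model_def by blast
  have ex: "\<forall>ys. set ys \<subseteq> carrier N \<longrightarrow> (\<exists>xs. tp_eq L (B', snd N') xs N ys)"
  proof (intro allI)
    fix ys show "set ys \<subseteq> carrier N \<longrightarrow> (\<exists>xs. tp_eq L (B', snd N') xs N ys)"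
    proof (induction ys rule: rev_induct)
      case Nil then show ?case using tp_eq_nil[OF cl ct mB' mN] by blast
    next
      case (snoc y ys)
      show ?case
      proof
        assume s: "set (ys @ [y]) \<subseteq> carrier N"
        then obtain xs where "tp_eq L (B', snd N') xs N ys" using snoc by auto
        then show "\<exists>xs. tp_eq L (B', snd N') xs N (ys @ [y])"
          using back_step[OF cl Twf mB' aN _ ] s by fastforce
      qed
    qed
  qed
  then obtain e' where te': "tp_eq L (B', snd N') e' N e" using eN by blast
  have "(B', snd C) = (B', snd N')" unfolding C_def by simp
  then have teC: "tp_eq L C e' N e" using tp_eq_elem[OF eBC] te' by simp
  obtain g where iso: "iso L g C N" and ge: "\<forall>i<length e'. g (e' ! i) = e ! i"
    using back_and_forth[OF cl Twf aC aN _ cN teC] cCs unfolding C_def by auto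
  have stC: "is_struct L C" using model_struct[OF mC] .
  have eM: "elem_sub L (g ` B') N" using iso_elem_sub[OF iso stC eBC] .
  have se': "set e' \<subseteq> B'" and le: "length e' = length e" using te' unfolding tp_eq_def by auto
  have "set e \<subseteq> g ` B'"
  proof
    fix x assume "x \<in> set e"
    then obtain i where i: "i < length e" "e ! i = x" by (metis in_set_conv_nth)
    then have "x = g (e' ! i)" using ge le by simp
    moreover have "e' ! i \<in> B'" using se' i le by (metis nth_mem subsetD)
    ultimately show "x \<in> g ` B'" by blast
  qed
  moreover have "g c' \<in> carrier N - g ` B'"
  proof -
    have c'C: "c' \<in> carrier C" using XC unfolding C_def by simp
    have injg: "inj_on g (carrier C)" and gC: "g ` carrier C = carrier N"
      using iso_inj[OF iso] iso_image[OF iso] by auto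
    have "B' \<subseteq> carrier C" using XC unfolding C_def by auto
    then have "g c' \<notin> g ` B'" using injg c'C c'B by (meson inj_on_image_mem_iff)
    then show ?thesis using gC c'C by blast
  qed
  moreover have "sat_tuple N \<delta> [g c']"
  proof -
    have c'C: "c' \<in> Cs" using XC by simp
    have "sat_tuple C \<delta> [c']" unfolding C_def using elem_sub_tuple[OF eC wf\<delta>] fv\<delta> c'C tc' by simp
    moreover have "fv \<delta> \<subseteq> {..<length [c']}" using fv\<delta> by simp
    moreover have "set [c'] \<subseteq> carrier C" using c'C unfolding C_def by simp
    ultimately have "sat_tuple N \<delta> (map g [c'])" using iso_tuple[OF iso stC wf\<delta>] by blast
    then show ?thesis by simp
  qed
  ultimately show ?thesis using eM by blast
qed


end
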